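(* Let $\varphi$ be a basic existential or basic universal sentence of spread $m$ and range $r'$ over a graph language $L$, and let $C,M\notin L$ be distinct unary predicate symbols. Let $G$ be an $L$-interpretation and $\lambda$ a layering of $\overline G$. Let $r\ge r'$ and $\ell>4r$ be integers, let $R$ be an $(\ell,r)$-cover of integers, and let $p$ be an $m$-plan for $R$. Suppose that for each $I\in R$, $$G[\lambda^{-1}(I)],\ C:=\lambda^{-1}(M_{2r}(I)),\ M:=\lambda^{-1}(M_r(I))\models\varphi^{(p(I))}.$$ Then $G\models\varphi$.
   Context: A graph language $L$ consists of a binary predicate symbol $e$ and a finite set of unary predicate symbols. An $L$-interpretation $G$ consists of a graph $\overline G$ and a set $S_C\subseteq V(\overline G)$ for each unary $C\in L$; $e$ is interpreted as adjacency in $\overline G$. For $S\subseteq V(\overline G)$, $G[S]$ is the interpretation on $\overline G[S]$ with each unary predicate restricted to $S$; "$H, C:=A, M:=B$" denotes the expansion of $H$ with new unary predicates $C,M$ interpreted as $A,B$. A layering of a graph is a function $\lambda:V\to\mathbb Z$ with $|\lambda(u)-\lambda(v)|\le1$ on edges. $d(x,y)\le r$ abbreviates $(\exists z_0,\dots,z_r)\,z_0=x\land z_r=y\land\bigwedge_{i=1}^r(z_{i-1}=z_i\lor e(z_{i-1},z_i))$. An $r$-local formula is a formula $\psi$ with one free variable $x$ in which all quantifications are of the form $(\exists y: d(x,y)\le r)$ or $(\forall y: d(x,y)\le r)$. A basic existential sentence is one of the form $(\exists x_1,\dots,x_m)\bigwedge_{1\le i<j\le m}d(x_i,x_j)>2r\land\bigwedge_{i=1}^m\psi(x_i)$,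 and a basic universal sentence is one of the form $(\forall x_1,\dots,x_{m+1})\bigl(\bigwedge_{1\le i<j\le m+1}d(x_i,x_j)>2r\bigr)\Rightarrow\bigvee_{i=1}^{m+1}\psi(x_i)$, where in both cases $\psi$ is $r$-local; $m$ is the spread, $r$ the range and $\psi$ the core. For such $\varphi$ and an integer $k\ge0$, the $(C,M,k)$-variant $\varphi^{(k)}$ is $(\exists x_1,\dots,x_k)\bigwedge_{1\le i<j\le k}d(x_i,x_j)>2r\land\bigwedge_{i=1}^k(C(x_i)\land\psi(x_i))$ if $\varphi$ is basic existential, and $(\forall x_1,\dots,x_{k+1})\bigl(\bigwedge_{i=1}^{k+1}M(x_i)\land\bigwedge_{1\le i<j\le k+1}d(x_i,x_j)>2r\bigr)\Rightarrow\bigvee_{i=1}^{k+1}\psi(x_i)$ if $\varphi$ is basic universal. For integers $\ell\ge 2r+1$ and $n$, the set of all intervals $\{i,i+1,\dots,i+\ell-1\}$ with $i\equiv n\pmod{\ell-2r}$ is an $(\ell,r)$-cover of integers (there are exactly $\ell-2r$ distinct ones). For an integer $d\ge0$ and $I=\{i,\dots,i+\ell-1\}$ in a cover, $M_d(I)=\{i+d,\dots,i+\ell-d-1\}$. An $m$-plan for a cover $R$ is a function $p:R\to\mathbb Z_{\ge0}$ with $\sum_{I\in R}p(I)=m$. *)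

theory Defs
  imports Main
begin

text \<open>Unary predicate symbols have type 'p; a graph language L is a finite set of them
  (the binary symbol e is implicit).\<close>

record ('v, 'p) interp =
  verts :: "'v set"
  adj :: "'v \<Rightarrow> 'v \<Rightarrow> bool"
  pred :: "'p \<Rightarrow> 'v set"

definition is_graph :: "('v, 'p) interp \<Rightarrow> bool" where
  "is_graph G \<longleftrightarrow>
     (\<forall>u v. adj G u v \<longrightarrow> u \<in> verts G \<and> v \<in> verts G) \<and>
     (\<forall>u v. adj G u v \<longrightarrow> adj G v u) \<and> (\<forall>u. \<not> adj G u u)"

definition is_L_interp :: "'p set \<Rightarrow> ('v, 'p) interp \<Rightarrow> bool" where
  "is_L_interp L G \<longleftrightarrow> finite L \<and> is_graph G \<and> (\<forall>P\<in>L. pred G P \<subseteq> verts G)"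

definition induced :: "('v, 'p) interp \<Rightarrow> 'v set \<Rightarrow> ('v, 'p) interp" where
  "induced G S = \<lparr> verts = verts G \<inter> S,
                   adj = (\<lambda>u v. u \<in> S \<and> v \<in> S \<and> adj G u v),
                   pred = (\<lambda>P. pred G P \<inter> S) \<rparr>"

definition expand :: "('v, 'p) interp \<Rightarrow> 'p \<Rightarrow> 'v set \<Rightarrow> 'p \<Rightarrow> 'v set \<Rightarrow> ('v, 'p) interp" where
  "expand H C A M B = H\<lparr> pred := (pred H)(C := A, M := B) \<rparr>"

text \<open>Semantics of the formula d(x,y) \<le> k (literal unfolding of the abbreviation:
  witnesses z_0,...,z_k in the domain).\<close>
definition dist_le :: "('v, 'p) interp \<Rightarrow> 'v \<Rightarrow> 'v \<Rightarrow> nat \<Rightarrow> bool" where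
  "dist_le G x y k \<longleftrightarrow> (\<exists>zs. length zs = Suc k \<and> set zs \<subseteq> verts G \<and>
      zs ! 0 = x \<and> zs ! k = y \<and>
      (\<forall>i<k. zs ! i = zs ! Suc i \<or> adj G (zs ! i) (zs ! Suc i)))"

text \<open>Syntax of formulas whose quantifiers are all bounded by d(x,y) \<le> r, where x is
  variable 0 (the free variable). Atoms: equality, e, unary predicates.\<close>
datatype 'p lfm =
    LEq nat nat
  | LEdge nat nat
  | LPred 'p nat
  | LNeg "'p lfm"
  | LConj "'p lfm" "'p lfm"
  | LDisj "'p lfm" "'p lfm"
  | LExB nat "'p lfm"
  | LAllB nat "'p lfm"

fun lsat :: "('v, 'p) interp \<Rightarrow> nat \<Rightarrow> 'p lfm \<Rightarrow> (nat \<Rightarrow> 'v) \<Rightarrow> bool" where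
  "lsat G r (LEq a b) env = (env a = env b)"
| "lsat G r (LEdge a b) env = adj G (env a) (env b)"
| "lsat G r (LPred P a) env = (env a \<in> pred G P)"
| "lsat G r (LNeg f) env = (\<not> lsat G r f env)"
| "lsat G r (LConj f g) env = (lsat G r f env \<and> lsat G r g env)"
| "lsat G r (LDisj f g) env = (lsat G r f env \<or> lsat G r g env)"
| "lsat G r (LExB y f) env =
     (\<exists>u\<in>verts G. dist_le G (env 0) u r \<and> lsat G r f (env(y := u)))"
| "lsat G r (LAllB y f) env =
     (\<forall>u\<in>verts G. dist_le G (env 0) u r \<longrightarrow> lsat G r f (env(y := u)))"

fun lfv :: "'p lfm \<Rightarrow> nat set" where
  "lfv (LEq a b) = {a, b}"
| "lfv (LEdge a b) = {a, b}"
| "lfv (LPred P a) = {a}"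
| "lfv (LNeg f) = lfv f"
| "lfv (LConj f g) = lfv f \<union> lfv g"
| "lfv (LDisj f g) = lfv f \<union> lfv g"
| "lfv (LExB y f) = {0} \<union> (lfv f - {y})"
| "lfv (LAllB y f) = {0} \<union> (lfv f - {y})"

fun lbound_ok :: "'p lfm \<Rightarrow> bool" where
  "lbound_ok (LNeg f) = lbound_ok f"
| "lbound_ok (LConj f g) = (lbound_ok f \<and> lbound_ok g)"
| "lbound_ok (LDisj f g) = (lbound_ok f \<and> lbound_ok g)"
| "lbound_ok (LExB y f) = (y \<noteq> 0 \<and> lbound_ok f)"
| "lbound_ok (LAllB y f) = (y \<noteq> 0 \<and> lbound_ok f)"
| "lbound_ok _ = True"

fun lpreds :: "'p lfm \<Rightarrow> 'p set" where
  "lpreds (LPred P a) = {P}"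
| "lpreds (LNeg f) = lpreds f"
| "lpreds (LConj f g) = lpreds f \<union> lpreds g"
| "lpreds (LDisj f g) = lpreds f \<union> lpreds g"
| "lpreds (LExB y f) = lpreds f"
| "lpreds (LAllB y f) = lpreds f"
| "lpreds _ = {}"

definition local_formula :: "'p set \<Rightarrow> 'p lfm \<Rightarrow> bool" where
  "local_formula L \<psi> \<longleftrightarrow> lfv \<psi> \<subseteq> {0} \<and> lbound_ok \<psi> \<and> lpreds \<psi> \<subseteq> L"

definition core_holds :: "('v, 'p) interp \<Rightarrow> nat \<Rightarrow> 'p lfm \<Rightarrow> 'v \<Rightarrow> bool" where
  "core_holds G r \<psi> v = lsat G r \<psi> (\<lambda>_. v)"

text \<open>BEx m r \<psi> / BAll m r \<psi>: basic existential / universal sentence with spread m,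
  range r and core \<psi>.\<close>
datatype 'p bsent = BEx nat nat "'p lfm" | BAll nat nat "'p lfm"

fun spread :: "'p bsent \<Rightarrow> nat" where
  "spread (BEx m r \<psi>) = m" | "spread (BAll m r \<psi>) = m"

fun range_of :: "'p bsent \<Rightarrow> nat" where
  "range_of (BEx m r \<psi>) = r" | "range_of (BAll m r \<psi>) = r"

fun core :: "'p bsent \<Rightarrow> 'p lfm" where
  "core (BEx m r \<psi>) = \<psi>" | "core (BAll m r \<psi>) = \<psi>"

definition basic_sentence :: "'p set \<Rightarrow> 'p bsent \<Rightarrow> bool" where
  "basic_sentence L \<phi> \<longleftrightarrow> local_formula L (core \<phi>)"

definition far_apart :: "('v, 'p) interp \<Rightarrow> nat \<Rightarrow> 'v list \<Rightarrow> bool" where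
  "far_apart G r xs \<longleftrightarrow>
     (\<forall>i j. i < j \<and> j < length xs \<longrightarrow> \<not> dist_le G (xs ! i) (xs ! j) (2 * r))"

fun bsat :: "('v, 'p) interp \<Rightarrow> 'p bsent \<Rightarrow> bool" where
  "bsat G (BEx m r \<psi>) =
     (\<exists>xs. length xs = m \<and> set xs \<subseteq> verts G \<and> far_apart G r xs \<and>
           (\<forall>i<m. core_holds G r \<psi> (xs ! i)))"
| "bsat G (BAll m r \<psi>) =
     (\<forall>xs. length xs = Suc m \<and> set xs \<subseteq> verts G \<and> far_apart G r xs \<longrightarrow>
           (\<exists>i<Suc m. core_holds G r \<psi> (xs ! i)))"

fun variant_sat :: "('v, 'p) interp \<Rightarrow> 'p \<Rightarrow> 'p \<Rightarrow> nat \<Rightarrow> 'p bsent \<Rightarrow> bool" where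
  "variant_sat G C M k (BEx m r \<psi>) =
     (\<exists>xs. length xs = k \<and> set xs \<subseteq> verts G \<and> far_apart G r xs \<and>
           (\<forall>i<k. xs ! i \<in> pred G C \<and> core_holds G r \<psi> (xs ! i)))"
| "variant_sat G C M k (BAll m r \<psi>) =
     (\<forall>xs. length xs = Suc k \<and> set xs \<subseteq> verts G \<and> (\<forall>i<Suc k. xs ! i \<in> pred G M) \<and>
           far_apart G r xs \<longrightarrow> (\<exists>i<Suc k. core_holds G r \<psi> (xs ! i)))"

definition layering :: "('v, 'p) interp \<Rightarrow> ('v \<Rightarrow> int) \<Rightarrow> bool" where
  "layering G lam \<longleftrightarrow> (\<forall>u v. adj G u v \<longrightarrow> \<bar>lam u - lam v\<bar> \<le> 1)"

definition layer_preimage :: "('v, 'p) interp \<Rightarrow> ('v \<Rightarrow> int) \<Rightarrow> int set \<Rightarrow> 'v set" where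
  "layer_preimage G lam I = {v \<in> verts G. lam v \<in> I}"

definition is_cover :: "nat \<Rightarrow> nat \<Rightarrow> int set set \<Rightarrow> bool" where
  "is_cover ell r R \<longleftrightarrow> ell \<ge> 2 * r + 1 \<and>
     (\<exists>n::int. R = {{i .. i + int ell - 1} | i. i mod (int ell - 2 * int r) = n mod (int ell - 2 * int r)})"

definition Mid :: "nat \<Rightarrow> int set \<Rightarrow> int set" where
  "Mid d I = {Min I + int d .. Max I - int d}"

definition is_plan :: "nat \<Rightarrow> int set set \<Rightarrow> (int set \<Rightarrow> nat) \<Rightarrow> bool" where
  "is_plan m R p \<longleftrightarrow> finite {I \<in> R. p I \<noteq> 0} \<and> (\<Sum>I\<in>{I \<in> R. p I \<noteq> 0}. p I) = m"

end

theory Submission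
  imports Defs
begin

lemma expand_simps[simp]:
  "verts (expand H C A M B) = verts H"
  "adj (expand H C A M B) = adj H"
  "P \<noteq> C \<Longrightarrow> P \<noteq> M \<Longrightarrow> pred (expand H C A M B) P = pred H P"
  "C \<noteq> M \<Longrightarrow> pred (expand H C A M B) C = A"
  "pred (expand H C A M B) M = B"
  by (auto simp: expand_def)

lemma induced_simps[simp]:
  "verts (induced G S) = verts G \<inter> S"
  "adj (induced G S) u v = (u \<in> S \<and> v \<in> S \<and> adj G u v)"
  "pred (induced G S) P = pred G P \<inter> S"
  by (auto simp: induced_def)

lemma dist_le_expand[simp]: "dist_le (expand H C A M B) x y k = dist_le H x y k"
  by (simp add: dist_le_def)

lemma dist_le_induced_mono: "dist_le (induced G S) x y k \<Longrightarrow> dist_le G x y k"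
proof -
  assume "dist_le (induced G S) x y k"
  then obtain zs where z: "length zs = Suc k" "set zs \<subseteq> verts G \<inter> S" "zs ! 0 = x" "zs ! k = y"
    "\<forall>i<k. zs ! i = zs ! Suc i \<or> (zs ! i \<in> S \<and> zs ! Suc i \<in> S \<and> adj G (zs ! i) (zs ! Suc i))"
    unfolding dist_le_def by auto
  have "\<forall>i<k. zs ! i = zs ! Suc i \<or> adj G (zs ! i) (zs ! Suc i)" using z(5) by blast
  moreover have "set zs \<subseteq> verts G" using z(2) by blast
  ultimately show ?thesis unfolding dist_le_def using z(1,3,4) by blast
qed

lemma abs_box: "\<bar>a - b\<bar> \<le> int k \<Longrightarrow> {b - int k .. b + int k} \<subseteq> I \<Longrightarrow> (a::int) \<in> I"
proof -
  assume "\<bar>a - b\<bar> \<le> int k" "{b - int k .. b + int k} \<subseteq> I"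
  moreover have "a \<in> {b - int k .. b + int k}" using calculation(1) by (simp add: abs_le_iff)
  ultimately show ?thesis by blast
qed

lemma path_layer:
  assumes "layering G lam" "\<forall>i<k. zs ! i = zs ! Suc i \<or> adj G (zs ! i) (zs ! Suc i)"
  shows "i \<le> k \<Longrightarrow> \<bar>lam (zs ! i) - lam (zs ! 0)\<bar> \<le> int i"
proof (induction i)
  case 0 then show ?case by simp
next
  case (Suc i)
  then have "i < k" by simp
  with assms(2) have "zs ! i = zs ! Suc i \<or> adj G (zs ! i) (zs ! Suc i)" by blast
  then have "\<bar>lam (zs ! i) - lam (zs ! Suc i)\<bar> \<le> 1"
    using assms(1) unfolding layering_def by auto
  moreover have "\<bar>lam (zs ! i) - lam (zs ! 0)\<bar> \<le> int i" using Suc by simp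
  ultimately show ?case unfolding abs_le_iff by linarith
qed

lemma dist_le_layer:
  assumes "layering G lam" "dist_le G x y k"
  shows "\<bar>lam y - lam x\<bar> \<le> int k"
proof -
  obtain zs where z: "length zs = Suc k" "zs ! 0 = x" "zs ! k = y"
    "\<forall>i<k. zs ! i = zs ! Suc i \<or> adj G (zs ! i) (zs ! Suc i)"
    using assms(2) unfolding dist_le_def by blast
  show ?thesis using path_layer[OF assms(1) z(4), of k] z by simp
qed

lemma dist_le_induced:
  assumes "layering G lam" "dist_le G x y k"
     "{lam x - int k .. lam x + int k} \<subseteq> I"
  shows "dist_le (induced G (layer_preimage G lam I)) x y k"
proof -
  obtain zs where z: "length zs = Suc k" "set zs \<subseteq> verts G" "zs ! 0 = x" "zs ! k = y"
    "\<forall>i<k. zs ! i = zs ! Suc i \<or> adj G (zs ! i) (zs ! Suc i)"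
    using assms(2) unfolding dist_le_def by blast
  have inS: "zs ! i \<in> layer_preimage G lam I" if "i \<le> k" for i
  proof -
    have "\<bar>lam (zs ! i) - lam x\<bar> \<le> int i" using path_layer[OF assms(1) z(5) that] z(3) by simp
    then have "lam (zs ! i) \<in> I" using assms(3) that by (intro abs_box[of _ _ k]) auto
    moreover have "zs ! i \<in> verts G" using z(1,2) that by (simp add: subset_iff)
    ultimately show ?thesis by (simp add: layer_preimage_def)
  qed
  have "set zs \<subseteq> layer_preimage G lam I"
  proof
    fix z assume "z \<in> set zs"
    then obtain i where "i < length zs" "z = zs ! i" by (auto simp: in_set_conv_nth)
    then show "z \<in> layer_preimage G lam I" using inS z(1) by simp
  qed
  then show ?thesis unfolding dist_le_def using z inS
    by (intro exI[of _ zs]) auto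
qed

lemma lsat_local:
  assumes lay: "layering G lam"
    and box: "{lam v - int r0 .. lam v + int r0} \<subseteq> I"
    and CL: "C \<notin> L" "M \<notin> L"
  shows "lbound_ok \<psi> \<Longrightarrow> lpreds \<psi> \<subseteq> L \<Longrightarrow> env 0 = v \<Longrightarrow>
    (\<forall>a. env a \<in> layer_preimage G lam I) \<Longrightarrow>
    lsat (expand (induced G (layer_preimage G lam I)) C A M B) r0 \<psi> env = lsat G r0 \<psi> env"
proof (induction \<psi> arbitrary: env)
  case (LPred P a)
  then have "P \<noteq> C" "P \<noteq> M" using CL by auto
  then show ?case using LPred by auto
next
  case (LExB y f)
  let ?S = "layer_preimage G lam I"
  let ?G' = "expand (induced G ?S) C A M B"
  have y0: "y \<noteq> 0" and bf: "lbound_ok f" and pf: "lpreds f \<subseteq> L" using LExB.prems by auto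
  have inS: "u \<in> ?S" if "u \<in> verts G" "dist_le G v u r0" for u
  proof -
    have "\<bar>lam u - lam v\<bar> \<le> int r0" using dist_le_layer[OF lay that(2)] .
    then have "lam u \<in> I" using box by (rule abs_box)
    then show ?thesis using that by (simp add: layer_preimage_def)
  qed
  have key: "(u \<in> verts G \<inter> ?S \<and> dist_le (induced G ?S) v u r0) \<longleftrightarrow> (u \<in> verts G \<and> dist_le G v u r0)" for u
  proof
    assume "u \<in> verts G \<inter> ?S \<and> dist_le (induced G ?S) v u r0"
    then show "u \<in> verts G \<and> dist_le G v u r0" using dist_le_induced_mono[of G ?S v u r0] by blast
  next
    assume a: "u \<in> verts G \<and> dist_le G v u r0"
    then have "dist_le (induced G ?S) v u r0" using dist_le_induced[OF lay _ box] by blast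
    then show "u \<in> verts G \<inter> ?S \<and> dist_le (induced G ?S) v u r0" using a inS by blast
  qed
  have IH: "lsat ?G' r0 f (env(y:=u)) = lsat G r0 f (env(y:=u))" if "u \<in> ?S" for u
  proof -
    have e0: "(env(y:=u)) 0 = v" using y0 LExB.prems(3) by simp
    have all: "\<forall>a. (env(y:=u)) a \<in> ?S" using LExB.prems(4) that by simp
    show ?thesis using LExB.IH[OF bf pf e0 all] .
  qed
  show ?case using key inS IH LExB.prems(3) by auto
next
  case (LAllB y f)
  let ?S = "layer_preimage G lam I"
  let ?G' = "expand (induced G ?S) C A M B"
  have y0: "y \<noteq> 0" and bf: "lbound_ok f" and pf: "lpreds f \<subseteq> L" using LAllB.prems by auto
  have inS: "u \<in> ?S" if "u \<in> verts G" "dist_le G v u r0" for u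
  proof -
    have "\<bar>lam u - lam v\<bar> \<le> int r0" using dist_le_layer[OF lay that(2)] .
    then have "lam u \<in> I" using box by (rule abs_box)
    then show ?thesis using that by (simp add: layer_preimage_def)
  qed
  have key: "(u \<in> verts G \<inter> ?S \<and> dist_le (induced G ?S) v u r0) \<longleftrightarrow> (u \<in> verts G \<and> dist_le G v u r0)" for u
  proof
    assume "u \<in> verts G \<inter> ?S \<and> dist_le (induced G ?S) v u r0"
    then show "u \<in> verts G \<and> dist_le G v u r0" using dist_le_induced_mono[of G ?S v u r0] by blast
  next
    assume a: "u \<in> verts G \<and> dist_le G v u r0"
    then have "dist_le (induced G ?S) v u r0" using dist_le_induced[OF lay _ box] by blast
    then show "u \<in> verts G \<inter> ?S \<and> dist_le (induced G ?S) v u r0" using a inS by blast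
  qed
  have IH: "lsat ?G' r0 f (env(y:=u)) = lsat G r0 f (env(y:=u))" if "u \<in> ?S" for u
  proof -
    have e0: "(env(y:=u)) 0 = v" using y0 LAllB.prems(3) by simp
    have all: "\<forall>a. (env(y:=u)) a \<in> ?S" using LAllB.prems(4) that by simp
    show ?thesis using LAllB.IH[OF bf pf e0 all] .
  qed
  show ?case using key inS IH LAllB.prems(3) by auto
qed (auto simp: layer_preimage_def)

lemma core_local:
  assumes "layering G lam" "{lam v - int r0 .. lam v + int r0} \<subseteq> I" "C \<notin> L" "M \<notin> L"
    "local_formula L \<psi>" "v \<in> verts G"
  shows "core_holds (expand (induced G (layer_preimage G lam I)) C A M B) r0 \<psi> v = core_holds G r0 \<psi> v"
proof -
  have "lam v \<in> I" using assms(2) by auto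
  then have "v \<in> layer_preimage G lam I" using assms(6) by (simp add: layer_preimage_def)
  then show ?thesis unfolding core_holds_def
    using lsat_local[OF assms(1-4)] assms(5) unfolding local_formula_def by auto
qed

lemma far_append:
  assumes "far_apart G r a" "far_apart G r b" "\<forall>x\<in>set a. \<forall>y\<in>set b. \<not> dist_le G x y (2*r)"
  shows "far_apart G r (a @ b)"
  unfolding far_apart_def
proof (intro allI impI)
  fix i j assume ij: "i < j \<and> j < length (a @ b)"
  show "\<not> dist_le G ((a @ b) ! i) ((a @ b) ! j) (2 * r)"
  proof (cases "j < length a")
    case True then show ?thesis using assms(1) ij by (auto simp: far_apart_def nth_append)
  next
    case False
    show ?thesis
    proof (cases "i < length a")
      case True
      then show ?thesis using False assms(3) ij by (auto simp: nth_append)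
    next
      case F2: False
      have "i - length a < j - length a" "j - length a < length b" using F2 False ij by auto
      then have "\<not> dist_le G (b ! (i - length a)) (b ! (j - length a)) (2 * r)"
        using assms(2) unfolding far_apart_def by blast
      then show ?thesis using False F2 by (simp add: nth_append)
    qed
  qed
qed

lemma far_concat:
  "(\<forall>t\<in>set ts. far_apart G r (f t)) \<Longrightarrow>
   (\<forall>s\<in>set ts. \<forall>t\<in>set ts. s \<noteq> t \<longrightarrow> (\<forall>x\<in>set (f s). \<forall>y\<in>set (f t). \<not> dist_le G x y (2*r))) \<Longrightarrow>
   distinct ts \<Longrightarrow> far_apart G r (concat (map f ts))"
proof (induction ts)
  case Nil then show ?case by (simp add: far_apart_def)
next
  case (Cons t ts)
  have "\<forall>x\<in>set (f t). \<forall>y\<in>set (concat (map f ts)). \<not> dist_le G x y (2*r)"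
  proof (intro ballI)
    fix x y assume x: "x \<in> set (f t)" and y: "y \<in> set (concat (map f ts))"
    then obtain t' where "t' \<in> set ts" "y \<in> set (f t')" by auto
    moreover have "t \<noteq> t'" using Cons.prems(3) calculation by auto
    ultimately show "\<not> dist_le G x y (2*r)" using Cons.prems(2) x by auto
  qed
  moreover have "far_apart G r (concat (map f ts))" using Cons by auto
  ultimately show ?case using Cons.prems(1) by (auto intro!: far_append)
qed


lemma Mid_int: "1 \<le> ell \<Longrightarrow> Mid k {i..i + int ell - 1} = {i + int k .. i + int ell - 1 - int k}"
proof -
  assume "1 \<le> ell"
  then have "Min {i..i + int ell - 1} = i" by (intro Min_eqI) auto
  moreover have "Max {i..i + int ell - 1} = i + int ell - 1" using \<open>1 \<le> ell\<close> by (intro Max_eqI) auto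
  ultimately show ?thesis by (simp add: Mid_def)
qed

lemma mod_sep: "(i::int) mod d = j mod d \<Longrightarrow> i \<noteq> j \<Longrightarrow> 0 < d \<Longrightarrow> d \<le> \<bar>i - j\<bar>"
proof -
  assume a: "i mod d = j mod d" "i \<noteq> j" "0 < d"
  then have "d dvd (i - j)" by (simp add: mod_eq_dvd_iff)
  then have "\<bar>d\<bar> \<le> \<bar>i - j\<bar>" using a(2) by (intro dvd_imp_le_int) auto
  then show ?thesis using a(3) by simp
qed

theorem mainTheorem13:
  fixes L :: "'p set" and \<phi> :: "'p bsent" and C M :: 'p
    and G :: "('v, 'p) interp" and lam :: "'v \<Rightarrow> int"
    and r ell :: nat and R :: "int set set" and p :: "int set \<Rightarrow> nat"
  assumes "basic_sentence L \<phi>"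
    and "finite L"
    and "C \<notin> L" and "M \<notin> L" and "C \<noteq> M"
    and "is_L_interp L G"
    and "layering G lam"
    and "range_of \<phi> \<le> r" and "ell > 4 * r"
    and "is_cover ell r R"
    and "is_plan (spread \<phi>) R p"
    and "\<forall>I\<in>R. variant_sat
           (expand (induced G (layer_preimage G lam I))
                   C (layer_preimage G lam (Mid (2 * r) I))
                   M (layer_preimage G lam (Mid r I)))
           C M (p I) \<phi>"
  shows "bsat G \<phi>"
proof -
  obtain n where Rdef: "R = {{i .. i + int ell - 1} | i. i mod (int ell - 2 * int r) = n mod (int ell - 2 * int r)}"
    using assms(10) unfolding is_cover_def by blast
  define d where "d = int ell - 2 * int r"
  have dpos: "d > 2 * int r" using assms(9) unfolding d_def by linarith
  have ell1: "1 \<le> ell" using assms(9) by linarith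
  have Rform: "\<exists>i. I = {i .. i + int ell - 1} \<and> i mod d = n mod d" if "I \<in> R" for I
    using that unfolding Rdef d_def by blast
  have Rmem: "{i .. i + int ell - 1} \<in> R" if "i mod d = n mod d" for i
    using that unfolding Rdef d_def by blast
  have box: "{lam x - int r0 .. lam x + int r0} \<subseteq> I"
    if IR: "I \<in> R" and lm: "lam x \<in> Mid k I" and rk: "r0 \<le> k" for I x r0 k
  proof -
    obtain i where i: "I = {i .. i + int ell - 1}" using Rform[OF IR] by blast
    show ?thesis using lm rk ell1 unfolding i Mid_int[OF ell1] by auto
  qed
  define GI where "GI I = expand (induced G (layer_preimage G lam I))
                   C (layer_preimage G lam (Mid (2 * r) I))
                   M (layer_preimage G lam (Mid r I))" for I
  have predC: "pred (GI I) C = layer_preimage G lam (Mid (2 * r) I)" for I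
    unfolding GI_def using assms(5) by simp
  have predM: "pred (GI I) M = layer_preimage G lam (Mid r I)" for I
    unfolding GI_def by simp
  have vertsGI: "verts (GI I) = verts G \<inter> layer_preimage G lam I" for I
    unfolding GI_def by simp
  have distGI: "dist_le (GI I) x y k = dist_le (induced G (layer_preimage G lam I)) x y k" for I x y k
    unfolding GI_def by simp
  have hyp: "\<forall>I\<in>R. variant_sat (GI I) C M (p I) \<phi>" using assms(12) unfolding GI_def by simp
  show ?thesis
  proof (cases \<phi>)
    case (BEx m r0 \<psi>)
    have loc: "local_formula L \<psi>" using assms(1) BEx by (simp add: basic_sentence_def)
    have r0r: "r0 \<le> r" using assms(8) BEx by simp
    have plan: "is_plan m R p" using assms(11) BEx by simp
    have ex: "\<forall>I\<in>R. \<exists>xs. length xs = p I \<and> set xs \<subseteq> verts (GI I) \<and> far_apart (GI I) r0 xs \<and>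
           (\<forall>i<p I. xs ! i \<in> pred (GI I) C \<and> core_holds (GI I) r0 \<psi> (xs ! i))"
      using hyp BEx by simp
    obtain f where f: "\<And>I. I \<in> R \<Longrightarrow> length (f I) = p I \<and> set (f I) \<subseteq> verts (GI I) \<and> far_apart (GI I) r0 (f I) \<and>
           (\<forall>i<p I. f I ! i \<in> pred (GI I) C \<and> core_holds (GI I) r0 \<psi> (f I ! i))"
      using bchoice[OF ex] by blast
    have elem: "x \<in> verts G \<and> lam x \<in> Mid (2 * r) I \<and> core_holds G r0 \<psi> x"
      if IR: "I \<in> R" and xf: "x \<in> set (f I)" for I x
    proof -
      obtain k where k: "k < p I" "x = f I ! k" using xf f[OF IR] by (auto simp: in_set_conv_nth)
      have "x \<in> layer_preimage G lam (Mid (2 * r) I)" and c: "core_holds (GI I) r0 \<psi> x"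
        using f[OF that(1)] k predC by auto
      then have xv: "x \<in> verts G" and xm: "lam x \<in> Mid (2 * r) I" by (auto simp: layer_preimage_def)
      have "core_holds G r0 \<psi> x"
        using c core_local[OF assms(7) box[OF that(1) xm] assms(3,4) loc xv] r0r unfolding GI_def by simp
      then show ?thesis using xv xm by simp
    qed
    have farG: "far_apart G r0 (f I)" if "I \<in> R" for I
      unfolding far_apart_def
    proof (intro allI impI notI)
      fix i j assume ij: "i < j \<and> j < length (f I)" and dl: "dist_le G (f I ! i) (f I ! j) (2 * r0)"
      have mem: "f I ! i \<in> set (f I)" using ij by auto
      have lm2: "lam (f I ! i) \<in> Mid (2 * r) I" using elem[OF that mem] by simp
      have rk2: "2 * r0 \<le> 2 * r" using r0r by simp
      have bx: "{lam (f I ! i) - int (2 * r0) .. lam (f I ! i) + int (2 * r0)} \<subseteq> I"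
        using box[OF that lm2 rk2] .
      have "dist_le (GI I) (f I ! i) (f I ! j) (2 * r0)"
        using dist_le_induced[OF assms(7) dl bx] distGI by simp
      moreover have "far_apart (GI I) r0 (f I)" using f[OF that] by simp
      ultimately show False using ij unfolding far_apart_def by blast
    qed
    have sep: "\<not> dist_le G x y (2 * r0)"
      if sR: "s \<in> R" and tR: "t \<in> R" and st: "s \<noteq> t" and xs: "x \<in> set (f s)" and ys: "y \<in> set (f t)" for s t x y
    proof
      assume dl: "dist_le G x y (2 * r0)"
      have ab: "\<bar>lam y - lam x\<bar> \<le> int (2 * r)" using dist_le_layer[OF assms(7) dl] r0r by simp
      obtain i where i: "s = {i .. i + int ell - 1}" "i mod d = n mod d" using Rform[OF sR] by blast
      obtain j where j: "t = {j .. j + int ell - 1}" "j mod d = n mod d" using Rform[OF tR] by blast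
      have "i \<noteq> j" using i j st by auto
      then have dij: "d \<le> \<bar>i - j\<bar>" using mod_sep[of i d j] i j dpos by simp
      have "lam x \<in> Mid (2 * r) s" "lam y \<in> Mid (2 * r) t" using elem sR tR xs ys by auto
      then have "i + 2 * int r \<le> lam x" "lam x \<le> i + int ell - 1 - 2 * int r"
        "j + 2 * int r \<le> lam y" "lam y \<le> j + int ell - 1 - 2 * int r"
        unfolding i j Mid_int[OF ell1] by auto
      note bnds = this
      have ab2: "lam y - lam x \<le> 2 * int r" "lam x - lam y \<le> 2 * int r" using ab by (simp_all add: abs_le_iff)
      show False
      proof (cases "i < j")
        case True
        then have "d \<le> j - i" using dij by simp
        then show False using bnds ab2 unfolding d_def by linarith
      next
        case False
        then have "d \<le> i - j" using dij by simp
        then show False using bnds ab2 unfolding d_def by linarith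
      qed
    qed
    define T where "T = {I \<in> R. p I \<noteq> 0}"
    have finT: "finite T" and sumT: "sum p T = m" using plan unfolding is_plan_def T_def by auto
    obtain ts where ts: "set ts = T" "distinct ts" using finite_distinct_list[OF finT] by blast
    have TR: "T \<subseteq> R" unfolding T_def by auto
    define xs where "xs = concat (map f ts)"
    have "length xs = sum_list (map p ts)"
      unfolding xs_def length_concat map_map comp_def
      using f ts TR by (intro arg_cong[where f = sum_list] map_cong) auto
    then have len: "length xs = m" using sum_list_distinct_conv_sum_set[OF ts(2), of p] ts(1) sumT by simp
    have el: "x \<in> verts G \<and> core_holds G r0 \<psi> x" if "x \<in> set xs" for x
      using that elem ts TR unfolding xs_def by auto
    have far: "far_apart G r0 xs"
      unfolding xs_def
    proof (rule far_concat)
      show "\<forall>t\<in>set ts. far_apart G r0 (f t)" using ts TR farG by auto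
      show "\<forall>s\<in>set ts. \<forall>t\<in>set ts. s \<noteq> t \<longrightarrow> (\<forall>x\<in>set (f s). \<forall>y\<in>set (f t). \<not> dist_le G x y (2*r0))"
        using ts TR sep by blast
    qed (rule ts(2))
    show ?thesis unfolding BEx bsat.simps
      by (intro exI[of _ xs]) (use len el far in auto)
  next
    case (BAll m r0 \<psi>)
    have loc: "local_formula L \<psi>" using assms(1) BAll by (simp add: basic_sentence_def)
    have r0r: "r0 \<le> r" using assms(8) BAll by simp
    have plan: "is_plan m R p" using assms(11) BAll by simp
    define T where "T = {I \<in> R. p I \<noteq> 0}"
    have finT: "finite T" and sumT: "sum p T = m" using plan unfolding is_plan_def T_def by auto
    have covers: "\<exists>I\<in>R. a \<in> Mid r I" for a
    proof -
      define i where "i = n + d * ((a - int r - n) div d)"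
      have "i mod d = n mod d" unfolding i_def by simp
      then have IR: "{i .. i + int ell - 1} \<in> R" by (rule Rmem)
      have eq: "a - int r - i = (a - int r - n) mod d" unfolding i_def
        using div_mult_mod_eq[of "a - int r - n" d] by (simp add: algebra_simps)
      have b1: "0 \<le> (a - int r - n) mod d" using dpos by simp
      have b2: "(a - int r - n) mod d < d" using dpos by simp
      have "i + int r \<le> a" using eq b1 by linarith
      moreover have "a \<le> i + int ell - 1 - int r" using eq b2 d_def by linarith
      ultimately have "a \<in> Mid r {i .. i + int ell - 1}" unfolding Mid_int[OF ell1] by simp
      then show ?thesis using IR by blast
    qed
    then have "\<forall>a. \<exists>I. I \<in> R \<and> a \<in> Mid r I" by blast
    then obtain g where g: "\<And>a. g a \<in> R \<and> a \<in> Mid r (g a)" using choice[of "\<lambda>a I. I \<in> R \<and> a \<in> Mid r I"] by blast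
    show ?thesis unfolding BAll bsat.simps
    proof (intro allI impI)
      fix xs assume xs: "length xs = Suc m \<and> set xs \<subseteq> verts G \<and> far_apart G r0 xs"
      show "\<exists>i<Suc m. core_holds G r0 \<psi> (xs ! i)"
      proof (rule ccontr)
        assume nocore: "\<not> (\<exists>i<Suc m. core_holds G r0 \<psi> (xs ! i))"
        define A where "A = {..<Suc m}"
        define h where "h j = g (lam (xs ! j))" for j
        have hR: "h j \<in> R" "lam (xs ! j) \<in> Mid r (h j)" for j unfolding h_def using g by auto
        have "\<exists>I\<in>R. p I < card {j \<in> A. h j = I}"
        proof (rule ccontr)
          assume "\<not> ?thesis"
          then have le: "card {j \<in> A. h j = I} \<le> p I" if "I \<in> R" for I using that by auto
          have finA: "finite A" unfolding A_def by simp
          have "Suc m = card A" unfolding A_def by simp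
          also have "\<dots> = (\<Sum>I\<in>h ` A. card {j \<in> A. h j = I})"
            using sum.image_gen[OF finA, of "\<lambda>_. 1" h] by (simp only: card_eq_sum)
          also have "\<dots> \<le> (\<Sum>I\<in>h ` A. p I)" using hR le by (intro sum_mono) auto
          also have "\<dots> \<le> sum p T"
          proof (rule sum_mono2[OF finT])
            show "h ` A \<subseteq> T"
            proof
              fix I assume "I \<in> h ` A"
              then obtain j where j: "j \<in> A" "I = h j" by auto
              have "j \<in> {j \<in> A. h j = I}" using j by simp
              then have "card {j \<in> A. h j = I} \<noteq> 0" using finA by auto
              moreover have IR': "I \<in> R" using hR(1)[of j] j(2) by simp
              ultimately have "p I \<noteq> 0" using le[OF IR'] by linarith
              then show "I \<in> T" unfolding T_def using hR j by auto
            qed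
          qed auto
          finally show False using sumT by simp
        qed
        then obtain I where IR: "I \<in> R" and big: "p I < card {j \<in> A. h j = I}" by blast
        have "Suc (p I) \<le> card {j \<in> A. h j = I}" using big by simp
        then obtain J where J: "J \<subseteq> {j \<in> A. h j = I}" "card J = Suc (p I)" "finite J"
          by (rule obtain_subset_with_card_n)
        define js where "js = sorted_list_of_set J"
        have jsJ: "set js = J" and lenjs: "length js = Suc (p I)" and ss: "sorted_wrt (<) js"
          unfolding js_def using J by auto
        have jprop: "js ! k < Suc m \<and> lam (xs ! (js ! k)) \<in> Mid r I" if "k < Suc (p I)" for k
        proof -
          have "js ! k \<in> J" using jsJ lenjs that by auto
          then have "js ! k \<in> A" "h (js ! k) = I" using J by auto
          then show ?thesis using hR(2)[of "js ! k"] unfolding A_def by simp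
        qed
        define ys where "ys = map (\<lambda>j. xs ! j) js"
        have lenys: "length ys = Suc (p I)" unfolding ys_def using lenjs by simp
        have ysk: "ys ! k = xs ! (js ! k)" if "k < Suc (p I)" for k
          unfolding ys_def using lenjs that by simp
        have xv: "xs ! (js ! k) \<in> verts G" if "k < Suc (p I)" for k
          using xs jprop[OF that] by (auto simp: subset_iff)
        have inI: "lam (xs ! (js ! k)) \<in> I" if "k < Suc (p I)" for k
          using box[OF IR jprop[THEN conjunct2, OF that], of 0] by auto
        have "set ys \<subseteq> verts (GI I)"
        proof
          fix y assume "y \<in> set ys"
          then obtain k where "k < Suc (p I)" "y = ys ! k" using lenys by (auto simp: in_set_conv_nth)
          then show "y \<in> verts (GI I)" using ysk xv inI vertsGI by (auto simp: layer_preimage_def)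
        qed
        moreover have "\<forall>i<Suc (p I). ys ! i \<in> pred (GI I) M"
          using ysk xv jprop predM by (auto simp: layer_preimage_def)
        moreover have "far_apart (GI I) r0 ys"
          unfolding far_apart_def
        proof (intro allI impI notI)
          fix a b assume ab: "a < b \<and> b < length ys" and dl: "dist_le (GI I) (ys ! a) (ys ! b) (2 * r0)"
          have "js ! a < js ! b" using sorted_wrt_nth_less[OF ss] ab lenjs lenys by auto
          moreover have "js ! b < length xs" using jprop[of b] ab lenys xs by auto
          moreover have "dist_le G (xs ! (js ! a)) (xs ! (js ! b)) (2 * r0)"
          proof -
            have "ys ! a = xs ! (js ! a)" "ys ! b = xs ! (js ! b)" using ysk ab lenys by auto
            then have "dist_le (induced G (layer_preimage G lam I)) (xs ! (js ! a)) (xs ! (js ! b)) (2 * r0)"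
              using dl distGI by simp
            then show ?thesis by (rule dist_le_induced_mono)
          qed
          ultimately show False using xs unfolding far_apart_def by blast
        qed
        moreover have hb: "variant_sat (GI I) C M (p I) (BAll m r0 \<psi>)" using hyp IR BAll by blast
        ultimately have "\<exists>k<Suc (p I). core_holds (GI I) r0 \<psi> (ys ! k)"
          using lenys unfolding variant_sat.simps by blast
        then obtain k where k: "k < Suc (p I)" "core_holds (GI I) r0 \<psi> (ys ! k)" by blast
        have "core_holds G r0 \<psi> (xs ! (js ! k))"
          using k ysk core_local[OF assms(7) box[OF IR jprop[THEN conjunct2, OF k(1)] r0r] assms(3,4) loc xv[OF k(1)]]
          unfolding GI_def by simp
        then show False using nocore jprop[OF k(1)] by blast
      qed
    qed
  qed
qed

end
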